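(* Let $k$ be a field, $V$ a $k$-vector space, and $\varphi\in\operatorname{End}_k(V)$ a finite potent endomorphism. Then the Drazin inverse $\varphi^D$ of $\varphi$ is a G-Drazin inverse of $\varphi$ if and only if $i(\varphi)\le 1$.
   Context: An endomorphism $\varphi$ of a $k$-vector space $V$ is finite potent if $\varphi^n(V)$ is finite dimensional for some $n$. For such $\varphi$, the AST-decomposition is $V=U_\varphi\oplus W_\varphi$ where $U_\varphi=\{v\in V: \varphi^m(v)=0 \text{ for some } m\}$ and $W_\varphi=\{v\in V: p(\varphi)(v)=0 \text{ for some } p(x)\in k[x] \text{ coprime to } x\}$; $\varphi|_{U_\varphi}$ is nilpotent, $W_\varphi$ is finite dimensional and $\varphi|_{W_\varphi}$ is an automorphism. The index $i(\varphi)$ is the nilpotency order of $\varphi|_{U_\varphi}$. The Drazin inverse $\varphi^D$ is the linear map equal to $(\varphi|_{W_\varphi})^{-1}$ on $W_\varphi$ and to $0$ on $U_\varphi$. An endomorphism $\psi$ is a G-Drazin inverse of $\varphi$ if $\varphi\circ\psi\circ\varphi=\varphi$ and $\psi\circ\varphi^{r}=\varphi^{r}\circ\psi$ with $r=i(\varphi)$. *)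

theory Defs
  imports Main "HOL-Computational_Algebra.Polynomial"
begin

text \<open>Vector spaces over an arbitrary field 'a are given by a scalar multiplication
  scale :: 'a \<Rightarrow> 'b \<Rightarrow> 'b satisfying the locale vector_space scale.\<close>

definition fin_dim_subset :: "('a::field \<Rightarrow> 'b::ab_group_add \<Rightarrow> 'b) \<Rightarrow> 'b set \<Rightarrow> bool" where
  "fin_dim_subset scale S \<longleftrightarrow> (\<exists>B. finite B \<and> B \<subseteq> S \<and> S \<subseteq> module.span scale B)"

definition finite_potent :: "('a::field \<Rightarrow> 'b::ab_group_add \<Rightarrow> 'b) \<Rightarrow> ('b \<Rightarrow> 'b) \<Rightarrow> bool" where
  "finite_potent scale \<phi> \<longleftrightarrow> (\<exists>n. fin_dim_subset scale (range (\<phi> ^^ n)))"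

definition poly_endo :: "('a::field \<Rightarrow> 'b::ab_group_add \<Rightarrow> 'b) \<Rightarrow> 'a poly \<Rightarrow> ('b \<Rightarrow> 'b) \<Rightarrow> 'b \<Rightarrow> 'b" where
  "poly_endo scale p \<phi> v = (\<Sum>i\<le>degree p. scale (coeff p i) ((\<phi> ^^ i) v))"

definition U_part :: "('b::ab_group_add \<Rightarrow> 'b) \<Rightarrow> 'b set" where
  "U_part \<phi> = {v. \<exists>m. (\<phi> ^^ m) v = 0}"

definition W_part :: "('a::field \<Rightarrow> 'b::ab_group_add \<Rightarrow> 'b) \<Rightarrow> ('b \<Rightarrow> 'b) \<Rightarrow> 'b set" where
  "W_part scale \<phi> = {v. \<exists>p::'a poly. coprime p [:0, 1:] \<and> poly_endo scale p \<phi> v = 0}"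

definition fp_index :: "('b::ab_group_add \<Rightarrow> 'b) \<Rightarrow> nat" where
  "fp_index \<phi> = (LEAST n. \<forall>v\<in>U_part \<phi>. (\<phi> ^^ n) v = 0)"

definition drazin_inv :: "('a::field \<Rightarrow> 'b::ab_group_add \<Rightarrow> 'b) \<Rightarrow> ('b \<Rightarrow> 'b) \<Rightarrow> 'b \<Rightarrow> 'b" where
  "drazin_inv scale \<phi> v = (THE y. y \<in> W_part scale \<phi> \<and>
      (\<exists>u\<in>U_part \<phi>. \<exists>w\<in>W_part scale \<phi>. v = u + w \<and> \<phi> y = w))"

definition G_drazin_inverse :: "('b \<Rightarrow> 'b) \<Rightarrow> ('b \<Rightarrow> 'b) \<Rightarrow> nat \<Rightarrow> bool" where
  "G_drazin_inverse \<phi> \<psi> r \<longleftrightarrow> \<phi> \<circ> \<psi> \<circ> \<phi> = \<phi> \<and> \<psi> \<circ> (\<phi> ^^ r) = (\<phi> ^^ r) \<circ> \<psi>"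

end

theory Submission
  imports Defs
begin

locale fpot = vector_space scale
  for scale :: "'a::field \<Rightarrow> 'b::ab_group_add \<Rightarrow> 'b" +
  fixes \<phi> :: "'b \<Rightarrow> 'b"
  assumes lin: "Vector_Spaces.linear scale scale \<phi>"
begin

lemma mh: "module_hom scale scale \<phi>"
  using lin by (rule module_hom_linearI)

lemma ph_add: "\<phi> (x + y) = \<phi> x + \<phi> y" using module_hom.add[OF mh] .
lemma ph_scale: "\<phi> (scale c x) = scale c (\<phi> x)" using module_hom.scale[OF mh] .
lemma ph_zero[simp]: "\<phi> 0 = 0" using module_hom.zero[OF mh] .
lemma ph_diff: "\<phi> (x - y) = \<phi> x - \<phi> y" using module_hom.diff[OF mh] .
lemma ph_sum: "\<phi> (sum g S) = (\<Sum>a\<in>S. \<phi> (g a))" using module_hom.sum[OF mh] .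

lemma pow_zero[simp]: "(\<phi> ^^ k) 0 = 0"
  by (induct k) auto
lemma pow_diff: "(\<phi> ^^ k) (x - y) = (\<phi> ^^ k) x - (\<phi> ^^ k) y"
  by (induct k) (auto simp: ph_diff)

abbreviation pe where "pe p \<equiv> poly_endo scale p \<phi>"

lemma pe_bound:
  assumes "degree p \<le> N"
  shows "pe p v = (\<Sum>i\<le>N. scale (coeff p i) ((\<phi>^^i) v))"
  unfolding poly_endo_def
  by (rule sum.mono_neutral_left) (use assms in \<open>auto intro!: coeff_eq_0 simp: not_le\<close>)

lemma pe_0[simp]: "pe 0 v = 0"
  by (simp add: poly_endo_def)

lemma pe_pCons: "pe (pCons a p) v = scale a v + \<phi> (pe p v)"
proof -
  have "pe (pCons a p) v = (\<Sum>i\<le>Suc (degree p). scale (coeff (pCons a p) i) ((\<phi>^^i) v))"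
    by (rule pe_bound) (simp add: degree_pCons_le)
  also have "\<dots> = scale a v + (\<Sum>i\<le>degree p. scale (coeff p i) ((\<phi>^^Suc i) v))"
    by (subst sum.atMost_Suc_shift) simp
  also have "\<dots> = scale a v + \<phi> (pe p v)"
    by (simp add: poly_endo_def ph_sum ph_scale)
  finally show ?thesis .
qed

lemma pe_add_v: "pe p (x + y) = pe p x + pe p y"
  by (induct p) (simp_all add: pe_pCons ph_add scale_right_distrib algebra_simps)
lemma pe_diff_v: "pe p (x - y) = pe p x - pe p y"
  by (induct p) (simp_all add: pe_pCons ph_diff scale_right_diff_distrib)
lemma pe_zero_v[simp]: "pe p 0 = 0"
  by (induct p) (simp_all add: pe_pCons)
lemma pe_phi: "pe p (\<phi> v) = \<phi> (pe p v)"
  by (induct p) (simp_all add: pe_pCons ph_add ph_scale)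
lemma pe_smult: "pe (smult c p) v = scale c (pe p v)"
  by (induct p) (simp_all add: pe_pCons ph_scale scale_right_distrib)
lemma pe_add_p: "pe (p + q) v = pe p v + pe q v"
proof -
  have "degree (p + q) \<le> max (degree p) (degree q)" by (rule degree_add_le) auto
  then show ?thesis
    by (simp add: pe_bound[of _ "max (degree p) (degree q)"] scale_left_distrib sum.distrib)
qed
lemma pe_mult: "pe (p * q) v = pe p (pe q v)"
  by (induct p) (simp_all add: pe_pCons pe_add_p pe_smult)
lemma pe_comm: "pe p (pe q v) = pe q (pe p v)"
  by (metis pe_mult mult.commute)
lemma pe_1[simp]: "pe 1 v = v"
  by (simp add: one_pCons pe_pCons)
lemma pe_x: "pe [:0,1:] v = \<phi> v"
  by (simp add: pe_pCons)
lemma pe_xpow: "pe ([:0,1:]^k) v = (\<phi>^^k) v"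
  by (induct k) (simp_all add: pe_mult pe_pCons)


lemma pe_diff_p: "pe (p - q) v = pe p v - pe q v"
proof -
  have "degree (p - q) \<le> max (degree p) (degree q)" by (rule degree_diff_le_max)
  then show ?thesis
    by (simp add: pe_bound[of _ "max (degree p) (degree q)"] scale_left_diff_distrib sum_subtractf)
qed

abbreviation "UU \<equiv> U_part \<phi>"
abbreviation "WW \<equiv> W_part scale \<phi>"

definition bez :: "'a poly \<Rightarrow> 'a poly \<Rightarrow> bool" where
  "bez a b \<longleftrightarrow> (\<exists>s t. s * a + t * b = 1)"

lemma bez_x: assumes "poly p 0 \<noteq> 0" shows "bez p [:0,1:]"
proof -
  obtain c p' where p: "p = pCons c p'" by (cases p)
  with assms have c: "c \<noteq> 0" by simp
  have "[:1/c:] * p + (- smult (1/c) p') * [:0,1:] = 1"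
    using c by (simp add: p one_pCons)
  then show ?thesis unfolding bez_def by blast
qed

lemma bez_mult: assumes "bez a b" "bez a c" shows "bez a (b * c)"
proof -
  from assms obtain A B C D where 1: "A * a + B * b = 1" and 2: "C * a + D * c = 1"
    unfolding bez_def by blast
  have "(A * a + B * b) * (C * a + D * c) = 1" using 1 2 by simp
  then have "(A * C * a + A * D * c + B * b * C) * a + (B * D) * (b * c) = 1"
    by (simp add: algebra_simps)
  then show ?thesis unfolding bez_def by blast
qed

lemma bez_pow: assumes "bez a b" shows "bez a (b ^ m)"
proof (induct m)
  case 0 then show ?case unfolding bez_def by (auto intro: exI[of _ 0])
next
  case (Suc m) then show ?case using bez_mult[OF assms Suc] by (simp add: mult.commute)
qed

lemma bez_coprime: assumes "bez a b" shows "coprime a b"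
proof -
  from assms obtain s t where st: "s * a + t * b = 1" unfolding bez_def by blast
  show ?thesis
  proof (rule coprimeI)
    fix d assume "d dvd a" "d dvd b"
    then have "d dvd s * a + t * b" by simp
    then show "is_unit d" using st by simp
  qed
qed

lemma cop_poly0: assumes "coprime p [:0,1:]" shows "poly p 0 \<noteq> (0::'a)"
proof
  assume "poly p 0 = 0"
  then have "[:0,1:] dvd p" using poly_eq_0_iff_dvd[of p 0] by simp
  then have "is_unit ([:0,1:] :: 'a poly)" using coprime_common_divisor[OF assms] by simp
  then show False using is_unit_iff_degree[of "[:0,1::'a:]"] by simp
qed

lemma coprime_x: "\<not> [:0,1:] dvd p \<Longrightarrow> coprime p ([:0,1:] :: 'a poly)"
proof -
  assume "\<not> [:0,1:] dvd p"
  then have "poly p 0 \<noteq> 0" using poly_eq_0_iff_dvd[of p 0] by simp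
  then show ?thesis by (rule bez_coprime[OF bez_x])
qed

lemma cop_iff: "coprime p ([:0,1:] :: 'a poly) \<longleftrightarrow> poly p 0 \<noteq> 0"
proof
  assume "poly p 0 \<noteq> 0"
  then show "coprime p [:0,1:]" by (rule bez_coprime[OF bez_x])
qed (rule cop_poly0)

lemma bezout_poly: "coprime p ([:0,1:] :: 'a poly) \<Longrightarrow> \<exists>s t. s * p + t * [:0,1:]^m = 1"
  using bez_pow[OF bez_x[OF cop_poly0]] unfolding bez_def by blast

lemma UW_zero:
  assumes "v \<in> UU" "v \<in> WW" shows "v = 0"
proof -
  from assms obtain m p where m: "(\<phi>^^m) v = 0" and p: "coprime p [:0,1:]" "pe p v = 0"
    unfolding U_part_def W_part_def by auto
  from p obtain s t where st: "s * p + t * [:0,1:]^m = 1" using bezout_poly by blast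
  have "v = pe (s * p + t * [:0,1:]^m) v" using st by simp
  also have "\<dots> = 0" by (simp add: pe_add_p pe_mult pe_xpow p m)
  finally show ?thesis .
qed

lemma U_0: "0 \<in> UU" unfolding U_part_def by (auto intro: exI[of _ 0])
lemma W_0: "0 \<in> WW" unfolding W_part_def by (auto intro: exI[of _ 1])

lemma U_phi: "v \<in> UU \<Longrightarrow> \<phi> v \<in> UU"
proof -
  assume "v \<in> UU"
  then obtain m where "(\<phi>^^m) v = 0" unfolding U_part_def by blast
  moreover have "(\<phi>^^m) (\<phi> v) = \<phi> ((\<phi>^^m) v)" by (rule funpow_swap1[symmetric])
  ultimately have "(\<phi>^^m) (\<phi> v) = 0" by simp
  then show ?thesis unfolding U_part_def by blast
qed
lemma U_pow: "v \<in> UU \<Longrightarrow> (\<phi>^^k) v \<in> UU"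
  by (induct k) (auto simp: U_phi)
lemma W_phi: "v \<in> WW \<Longrightarrow> \<phi> v \<in> WW"
  unfolding W_part_def by (auto simp: pe_phi)

lemma U_diff: "u \<in> UU \<Longrightarrow> u' \<in> UU \<Longrightarrow> u - u' \<in> UU"
proof -
  assume "u \<in> UU" "u' \<in> UU"
  then obtain m m' where "(\<phi>^^m) u = 0" "(\<phi>^^m') u' = 0" unfolding U_part_def by auto
  then have "(\<phi>^^(m'+m)) u = 0" "(\<phi>^^(m+m')) u' = 0" by (simp_all add: funpow_add)
  then have "(\<phi>^^(m+m')) (u - u') = 0" by (simp add: pow_diff add.commute)
  then show ?thesis unfolding U_part_def by blast
qed

lemma W_diff: "w \<in> WW \<Longrightarrow> w' \<in> WW \<Longrightarrow> w - w' \<in> WW"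
proof -
  assume "w \<in> WW" "w' \<in> WW"
  then obtain p p' where p: "coprime p [:0,1:]" "pe p w = 0" and p': "coprime p' [:0,1:]" "pe p' w' = 0"
    unfolding W_part_def by auto
  have "pe (p * p') (w - w') = 0"
    by (simp add: pe_diff_v pe_mult p' pe_comm[of p p'] p)
  moreover have "coprime (p * p') [:0,1:]" using p p' by (simp add: cop_iff)
  ultimately show ?thesis unfolding W_part_def by blast
qed

lemma W_surj: "w \<in> WW \<Longrightarrow> \<exists>y\<in>WW. \<phi> y = w"
proof -
  assume "w \<in> WW"
  then obtain p where p: "coprime p [:0,1:]" "pe p w = 0" unfolding W_part_def by auto
  then obtain s t where st: "s * p + t * [:0,1:]^1 = 1" using bezout_poly by blast
  have "w = pe (s * p + t * [:0,1:]) w" using st by simp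
  also have "\<dots> = \<phi> (pe t w)" by (simp add: pe_add_p pe_mult p pe_pCons pe_phi)
  finally have 1: "w = \<phi> (pe t w)" .
  have "pe p (pe t w) = 0" by (simp add: pe_comm[of p t] p)
  then have "pe t w \<in> WW" using p unfolding W_part_def by blast
  with 1 show ?thesis by metis
qed

lemma W_surj_pow: "w \<in> WW \<Longrightarrow> \<exists>y\<in>WW. (\<phi>^^k) y = w"
proof (induct k arbitrary: w)
  case 0 then show ?case by auto
next
  case (Suc k)
  then obtain y where "y \<in> WW" "\<phi> y = w" using W_surj by blast
  with Suc obtain y' where "y' \<in> WW" "(\<phi>^^k) y' = y" by blast
  then show ?case using \<open>\<phi> y = w\<close> by auto
qed

lemma D_eq:
  assumes "u \<in> UU" "w \<in> WW" "y \<in> WW" "\<phi> y = w"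
  shows "drazin_inv scale \<phi> (u + w) = y"
  unfolding drazin_inv_def
proof (rule the_equality)
  show "y \<in> WW \<and> (\<exists>u'\<in>UU. \<exists>w'\<in>WW. u + w = u' + w' \<and> \<phi> y = w')"
    using assms by blast
next
  fix y' assume "y' \<in> WW \<and> (\<exists>u'\<in>UU. \<exists>w'\<in>WW. u + w = u' + w' \<and> \<phi> y' = w')"
  then obtain u' w' where h: "y' \<in> WW" "u' \<in> UU" "w' \<in> WW" "u + w = u' + w'" "\<phi> y' = w'" by blast
  have "u - u' = w' - w" using h(4) by (simp add: algebra_simps)
  moreover have "u - u' \<in> UU" using assms h by (simp add: U_diff)
  moreover have "w' - w \<in> WW" using assms h by (simp add: W_diff)
  ultimately have "w' - w = 0" using UW_zero by metis
  then have "\<phi> (y' - y) = 0" using h assms by (simp add: ph_diff)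
  then have "y' - y \<in> UU" unfolding U_part_def by (auto intro: exI[of _ 1])
  moreover have "y' - y \<in> WW" using h assms by (simp add: W_diff)
  ultimately have "y' - y = 0" using UW_zero by blast
  then show "y' = y" by simp
qed

end

locale fpot2 = fpot +
  fixes n :: nat and B :: "'b set"
  assumes finB: "finite B" and rngB: "range (\<phi>^^n) \<subseteq> span B"
begin

lemma exists_q:
  assumes z: "z \<in> range (\<phi>^^n)"
  shows "\<exists>q. q \<noteq> 0 \<and> degree q \<le> card B \<and> pe q z = 0"
proof -
  define d where "d = card B"
  define f where "f i = (\<phi>^^i) z" for i
  show ?thesis
  proof (cases "inj_on f {..d}")
    case False
    then obtain i j where ij: "i \<le> d" "j \<le> d" "i \<noteq> j" "f i = f j"
      unfolding inj_on_def by auto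
    define q where "q = monom (1::'a) i - monom 1 j"
    have "coeff q i = 1" using ij by (simp add: q_def)
    then have "q \<noteq> 0" by auto
    moreover have dq: "degree q \<le> d" unfolding q_def
      by (rule degree_diff_le) (use ij in \<open>auto intro: order.trans[OF degree_monom_le]\<close>)
    moreover have "pe q z = 0"
    proof -
      have "pe q z = (\<Sum>k\<le>d. scale (coeff q k) ((\<phi>^^k) z))" by (rule pe_bound[OF dq])
      also have "\<dots> = (\<Sum>k\<le>d. (if k = i then f k else 0) - (if k = j then f k else 0))"
        by (rule sum.cong) (auto simp: q_def f_def scale_left_diff_distrib)
      also have "\<dots> = f i - f j" using ij by (simp add: sum_subtractf)
      finally show ?thesis using ij by simp
    qed
    ultimately show ?thesis unfolding d_def by blast
  next
    case True
    define S where "S = f ` {..d}"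
    have cardS: "card S = Suc d" unfolding S_def using True by (simp add: card_image)
    have fS: "finite S" unfolding S_def by simp
    have "S \<subseteq> span B"
    proof
      fix v assume "v \<in> S"
      then obtain i where v: "v = (\<phi>^^i) z" unfolding S_def f_def by auto
      from z obtain a where a: "z = (\<phi>^^n) a" by auto
      have "v = (\<phi>^^n) ((\<phi>^^i) a)" unfolding v a
        by (metis comp_apply funpow_add add.commute)
      then show "v \<in> span B" using rngB by auto
    qed
    then have "dependent S"
      using independent_span_bound[OF finB] cardS unfolding d_def by fastforce
    then obtain u where u: "\<exists>v\<in>S. u v \<noteq> 0" "(\<Sum>v\<in>S. scale (u v) v) = 0"
      using dependent_finite[OF fS] by blast
    define q where "q = (\<Sum>i\<le>d. monom (u (f i)) i)"
    have cq: "coeff q k = (if k \<le> d then u (f k) else 0)" for k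
      unfolding q_def coeff_sum by (simp add: sum.delta)
    have dq: "degree q \<le> d" by (rule degree_le) (simp add: cq)
    have "q \<noteq> 0"
    proof
      assume "q = 0"
      from u(1) obtain i where "i \<le> d" "u (f i) \<noteq> 0" unfolding S_def by auto
      then have "coeff q i \<noteq> 0" by (simp add: cq)
      with \<open>q = 0\<close> show False by simp
    qed
    moreover have "pe q z = 0"
    proof -
      have "pe q z = (\<Sum>k\<le>d. scale (coeff q k) ((\<phi>^^k) z))" by (rule pe_bound[OF dq])
      also have "\<dots> = (\<Sum>k\<le>d. scale (u (f k)) (f k))"
        by (rule sum.cong) (auto simp: cq f_def)
      also have "\<dots> = (\<Sum>v\<in>S. scale (u v) v)"
        unfolding S_def by (subst sum.reindex[OF True]) simp
      finally show ?thesis using u(2) by simp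
    qed
    ultimately show ?thesis using dq unfolding d_def by blast
  qed
qed

lemma annih:
  assumes z: "z \<in> range (\<phi>^^n)"
  shows "\<exists>j p. j \<le> card B \<and> coprime p [:0,1:] \<and> pe p ((\<phi>^^j) z) = 0"
proof -
  from exists_q[OF z] obtain q where q: "q \<noteq> 0" "degree q \<le> card B" "pe q z = 0" by blast
  from order_decomp[OF q(1), of 0] obtain p where
    p: "q = [:0,1:] ^ order 0 q * p" "\<not> [:0,1:] dvd p" by auto
  have "order 0 q \<le> card B" using order_degree[OF q(1), of 0] q(2) by simp
  moreover have "coprime p [:0,1:]" using coprime_x[OF p(2)] .
  moreover have "pe p ((\<phi>^^(order 0 q)) z) = 0"
    using q(3) p(1) by (metis pe_mult pe_xpow mult.commute)
  ultimately show ?thesis by blast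
qed

lemma decomp: "\<exists>u\<in>UU. \<exists>w\<in>WW. v = u + w"
proof -
  define z where "z = (\<phi>^^n) v"
  have "z \<in> range (\<phi>^^n)" unfolding z_def by simp
  from annih[OF this] obtain j p where p: "coprime p [:0,1:]" "pe p ((\<phi>^^j) z) = 0" by blast
  from bezout_poly[OF p(1)] obtain s t where st: "s * p + t * [:0,1:]^j = 1" by blast
  define u' where "u' = pe s (pe p z)"
  define w' where "w' = pe t ((\<phi>^^j) z)"
  have "z = pe (s * p + t * [:0,1:]^j) z" using st by simp
  also have "\<dots> = u' + w'" by (simp add: pe_add_p pe_mult pe_xpow u'_def w'_def)
  finally have zuw: "z = u' + w'" .
  have "(\<phi>^^j) u' = 0"
    unfolding u'_def using p(2) by (metis pe_xpow pe_comm pe_zero_v)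
  then have u'U: "u' \<in> UU" unfolding U_part_def by blast
  have "pe p w' = 0" unfolding w'_def using p(2) by (metis pe_comm pe_zero_v)
  then have "w' \<in> WW" unfolding W_part_def using p(1) by blast
  from W_surj_pow[OF this] obtain y where y: "y \<in> WW" "(\<phi>^^n) y = w'" by blast
  have "(\<phi>^^n) (v - y) = u'" using zuw y unfolding z_def by (simp add: pow_diff)
  then have "(\<phi>^^n) (v - y) \<in> UU" using u'U by simp
  then obtain m where "(\<phi>^^m) ((\<phi>^^n) (v - y)) = 0" unfolding U_part_def by blast
  then have "(\<phi>^^(m+n)) (v - y) = 0" by (simp add: funpow_add)
  then have "v - y \<in> UU" unfolding U_part_def by blast
  moreover have "v = (v - y) + y" by simp
  ultimately show ?thesis using y(1) by blast
qed

lemma bound: "v \<in> UU \<Longrightarrow> (\<phi>^^(card B + n)) v = 0"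
proof -
  assume v: "v \<in> UU"
  define z where "z = (\<phi>^^n) v"
  have zU: "z \<in> UU" unfolding z_def using U_pow[OF v] .
  have "z \<in> range (\<phi>^^n)" unfolding z_def by simp
  from annih[OF this] obtain j p where p: "j \<le> card B" "coprime p [:0,1:]" "pe p ((\<phi>^^j) z) = 0"
    by blast
  have "(\<phi>^^j) z \<in> WW" using p unfolding W_part_def by blast
  moreover have "(\<phi>^^j) z \<in> UU" using U_pow[OF zU] .
  ultimately have 0: "(\<phi>^^j) z = 0" using UW_zero by blast
  have "(\<phi>^^(card B + n)) v = (\<phi>^^(card B - j)) ((\<phi>^^j) z)"
  proof -
    have e: "card B + n = (card B - j) + j + n" using p(1) by simp
    show ?thesis unfolding z_def e by (simp only: funpow_add comp_apply)
  qed
  then show ?thesis using 0 by simp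
qed

end

theorem corollary3p13:
  fixes scale :: "'a::field \<Rightarrow> 'b::ab_group_add \<Rightarrow> 'b" and \<phi> :: "'b \<Rightarrow> 'b"
  assumes "vector_space scale"
    and "Vector_Spaces.linear scale scale \<phi>"
    and "finite_potent scale \<phi>"
  shows "G_drazin_inverse \<phi> (drazin_inv scale \<phi>) (fp_index \<phi>) \<longleftrightarrow> fp_index \<phi> \<le> 1"
proof -
  interpret fpot scale \<phi>
    using assms(1,2) by (simp add: fpot_def fpot_axioms_def)
  from assms(3) obtain n B where nB: "finite B" "range (\<phi>^^n) \<subseteq> span B"
    unfolding finite_potent_def fin_dim_subset_def by blast
  interpret fpot2 scale \<phi> n B
    using nB by unfold_locales
  define D where "D = drazin_inv scale \<phi>"
  define r where "r = fp_index \<phi>"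
  have key: "\<phi> (D (\<phi> v)) = \<phi> v \<and> D (\<phi> v) = \<phi> (D v)" if kill: "\<forall>u\<in>UU. \<phi> u = 0" for v
  proof -
    from decomp[of v] obtain u w where uw: "u \<in> UU" "w \<in> WW" "v = u + w" by blast
    from W_surj[OF uw(2)] obtain y where y: "y \<in> WW" "\<phi> y = w" by blast
    have Dv: "D v = y" unfolding D_def uw(3) by (rule D_eq[OF uw(1,2) y])
    have "\<phi> v = 0 + \<phi> w" using uw kill by (simp add: ph_add)
    then have "D (\<phi> v) = w" unfolding D_def using D_eq[OF U_0 W_phi[OF uw(2)] uw(2)] by simp
    moreover have "\<phi> w = \<phi> v" using uw kill by (simp add: ph_add)
    ultimately show ?thesis using Dv y by simp
  qed
  show ?thesis
    unfolding D_def[symmetric] r_def[symmetric]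
  proof
    assume G: "G_drazin_inverse \<phi> D r"
    have "\<forall>v\<in>UU. (\<phi>^^1) v = 0"
    proof
      fix v assume v: "v \<in> UU"
      have "\<phi> v = \<phi> (D (\<phi> v))" using G unfolding G_drazin_inverse_def by (metis comp_apply)
      moreover have "D (\<phi> v) = 0"
        unfolding D_def using D_eq[OF U_phi[OF v] W_0 W_0] by simp
      ultimately show "(\<phi>^^1) v = 0" by simp
    qed
    then show "r \<le> 1" unfolding r_def fp_index_def by (rule Least_le)
  next
    assume r1: "r \<le> 1"
    have "\<forall>v\<in>UU. (\<phi>^^r) v = 0"
      unfolding r_def fp_index_def by (rule LeastI_ex) (use bound in blast)
    then have kill: "\<forall>u\<in>UU. \<phi> u = 0"
      using r1 by (cases r) auto
    show "G_drazin_inverse \<phi> D r"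
      unfolding G_drazin_inverse_def
    proof
      show "\<phi> \<circ> D \<circ> \<phi> = \<phi>"
      proof (rule ext)
        fix v show "(\<phi> \<circ> D \<circ> \<phi>) v = \<phi> v"
          using conjunct1[OF key[OF kill, of v]] by (simp only: comp_apply)
      qed
      show "D \<circ> \<phi> ^^ r = \<phi> ^^ r \<circ> D"
      proof (cases r)
        case 0 then show ?thesis by simp
      next
        case (Suc k) then have "r = 1" using r1 by simp
        then show ?thesis using key[OF kill] by (auto simp: fun_eq_iff)
      qed
    qed
  qed
qed

end
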